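(* Let $g:(0,\infty)\times[0,\infty)\to\mathbb{R}$ be non-decreasing in the second variable, and assume that for some $t_0$, $S=\sup_{t>t_0,\,h,k>0}|g(t,h+k)-g(t+h,k)-g(t,h)|<\infty$. Then: (i) the quantities $\limsup_{t\to\infty}\frac{g(t,h)}{h}$ and $\liminf_{t\to\infty}\frac{g(t,h)}{h}$ have limits as $h\to\infty$; (ii) $\displaystyle\lim_{t\to\infty}\limsup_{h\to\infty}\frac{g(t,h)}{h}\le\lim_{h\to\infty}\limsup_{t\to\infty}\frac{g(t,h)}{h}$ and $\displaystyle\lim_{t\to\infty}\liminf_{h\to\infty}\frac{g(t,h)}{h}\ge\lim_{h\to\infty}\liminf_{t\to\infty}\frac{g(t,h)}{h}$; (iii) $\lim_{h\to\infty}\limsup_{t\to\infty}\frac{g(t,h)}{h}$ is infinite if and only if $\limsup_{t\to\infty}g(t,h)$ is infinite for one (equivalently, for every) $h>0$. *)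

theory Defs
  imports "HOL-Analysis.Analysis"
begin

end

theory Submission
  imports Defs
begin

lemma Liminf_geI:
  fixes f :: "'a \<Rightarrow> ereal"
  assumes "\<And>r. ereal r < X \<Longrightarrow> eventually (\<lambda>x. ereal r < f x) F"
  shows "X \<le> Liminf F f"
  unfolding le_Liminf_iff
proof (intro allI impI)
  fix y assume "y < X"
  then obtain r where r: "y < ereal r" "ereal r < X" using ereal_dense2 by blast
  show "eventually (\<lambda>x. y < f x) F"
    using assms[OF r(2)] by eventually_elim (use r in auto)
qed

lemma Limsup_leI:
  fixes f :: "'a \<Rightarrow> ereal"
  assumes "\<And>r. X < ereal r \<Longrightarrow> eventually (\<lambda>x. f x < ereal r) F"
  shows "Limsup F f \<le> X"
  unfolding Limsup_le_iff
proof (intro allI impI)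
  fix y assume "X < y"
  then obtain r where r: "X < ereal r" "ereal r < y" using ereal_dense2 by blast
  show "eventually (\<lambda>x. f x < y) F"
    using assms[OF r(1)] by eventually_elim (use r in auto)
qed

lemma sandwich_conv:
  fixes f :: "real \<Rightarrow> ereal"
  assumes "Limsup at_top f \<le> X" "X \<le> Liminf at_top f"
  shows "(f \<longlongrightarrow> X) at_top"
proof -
  have "Liminf at_top f \<le> Limsup at_top f" by (rule Liminf_le_Limsup) simp
  with assms have "Liminf at_top f = X" "Limsup at_top f = X" by auto
  then show ?thesis by (subst tendsto_iff_Liminf_eq_Limsup) auto
qed

lemma ev_real_ge: "eventually (\<lambda>x::real. P x) at_top \<longleftrightarrow> (\<exists>N. \<forall>x\<ge>N. P x)"
  by (rule eventually_at_top_linorder)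

lemma ev_inv_small: "0 < e \<Longrightarrow> eventually (\<lambda>h::real. \<bar>c\<bar> / h < e) at_top"
proof -
  assume e: "0 < e"
  show ?thesis unfolding eventually_at_top_linorder
  proof (intro exI[of _ "\<bar>c\<bar>/e + 1"] allI impI)
    fix h assume h: "\<bar>c\<bar>/e + 1 \<le> h"
    have "\<bar>c\<bar>/e \<ge> 0" using e by simp
    hence hp: "h > 0" using h by linarith
    have "\<bar>c\<bar> < e * h" using h e by (simp add: field_simps)
    thus "\<bar>c\<bar> / h < e" using hp by (simp add: field_simps)
  qed
qed

lemma ev_lin: "0 < a \<Longrightarrow> eventually (\<lambda>h::real. c < a * h) at_top"
proof -
  assume a: "0 < a"
  show ?thesis unfolding eventually_at_top_linorder
  proof (intro exI[of _ "c/a + 1"] allI impI)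
    fix h assume "c/a + 1 \<le> h"
    hence "c/a < h" by linarith
    thus "c < a * h" using a by (simp add: field_simps)
  qed
qed

lemma ev_shift: "eventually P at_top \<Longrightarrow> eventually (\<lambda>h::real. P (d + h)) at_top"
  unfolding eventually_at_top_linorder
proof -
  assume "\<exists>N. \<forall>n\<ge>N. P n"
  then obtain N where N: "\<forall>n\<ge>N. P n" by blast
  show "\<exists>N. \<forall>n\<ge>N. P (d + n)" by (rule exI[of _ "N - d"]) (use N in auto)
qed

lemma le_by_dense:
  fixes X Y :: ereal assumes "\<And>r. X < ereal r \<Longrightarrow> Y \<le> ereal r" shows "Y \<le> X"
proof (rule ccontr)
  assume "\<not> Y \<le> X"
  then have "X < Y" by simp
  then obtain r where r: "X < ereal r" "ereal r < Y" using ereal_dense2 by blast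
  from assms[OF r(1)] r(2) show False by simp
qed

lemma ge_by_dense:
  fixes X Y :: ereal assumes "\<And>r. ereal r < X \<Longrightarrow> ereal r \<le> Y" shows "X \<le> Y"
proof (rule ccontr)
  assume "\<not> X \<le> Y"
  then have "Y < X" by simp
  then obtain r where r: "Y < ereal r" "ereal r < X" using ereal_dense2 by blast
  from assms[OF r(2)] r(1) show False by simp
qed

lemma aux1: "(x::real) \<le> a + y \<Longrightarrow> y \<le> (c - a)/2 \<Longrightarrow> x \<le> (a + c)/2" by (simp add: field_simps)
lemma aux2: "(a::real) - y \<le> x \<Longrightarrow> y \<le> (a - c)/2 \<Longrightarrow> (a + c)/2 \<le> x" by (simp add: field_simps)

locale P52 =
  fixes g :: "real \<Rightarrow> real \<Rightarrow> real" and T S :: real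
  assumes T0: "0 \<le> T" and S0: "0 \<le> S"
  and mono: "\<And>t h k. T < t \<Longrightarrow> 0 \<le> h \<Longrightarrow> h \<le> k \<Longrightarrow> g t h \<le> g t k"
  and sub: "\<And>t h k. T < t \<Longrightarrow> 0 < h \<Longrightarrow> 0 < k \<Longrightarrow> g t (h+k) \<le> g (t+h) k + g t h + S"
  and sup: "\<And>t h k. T < t \<Longrightarrow> 0 < h \<Longrightarrow> 0 < k \<Longrightarrow> g (t+h) k + g t h - S \<le> g t (h+k)"
begin

lemma lower: assumes "T < s" "0 < k" shows "- S \<le> g s k"
proof -
  define t where "t = (T + s) / 2"
  have t: "T < t" "0 < s - t" using assms by (auto simp: t_def)
  have "g t (s - t) \<le> g t ((s - t) + k)" using t assms by (intro mono) auto
  also have "\<dots> \<le> g (t + (s - t)) k + g t (s - t) + S" using t assms by (intro sub) auto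
  finally show ?thesis by simp
qed

lemma iter_sub:
  assumes "T < t" "0 < h0" "\<And>s. t \<le> s \<Longrightarrow> g s h0 \<le> b" "1 \<le> n"
  shows "g t (real n * h0) \<le> real n * (b + S) - S"
  using assms(4)
proof (induction n rule: dec_induct)
  case base then show ?case using assms(3)[of t] by simp
next
  case (step n)
  have "g t (real (Suc n) * h0) = g t (real n * h0 + h0)" by (simp add: algebra_simps)
  also have "\<dots> \<le> g (t + real n * h0) h0 + g t (real n * h0) + S"
    using assms step by (intro sub) auto
  also have "\<dots> \<le> b + (real n * (b + S) - S) + S"
    using assms(3)[of "t + real n * h0"] step assms(2) by simp
  finally show ?case by (simp add: algebra_simps)
qed

lemma iter_sup:
  assumes "T < t" "0 < h0" "\<And>s. t \<le> s \<Longrightarrow> b \<le> g s h0" "1 \<le> n"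
  shows "real n * (b - S) + S \<le> g t (real n * h0)"
  using assms(4)
proof (induction n rule: dec_induct)
  case base then show ?case using assms(3)[of t] by simp
next
  case (step n)
  have "b + (real n * (b - S) + S) - S \<le> g (t + real n * h0) h0 + g t (real n * h0) - S"
    using assms(3)[of "t + real n * h0"] step assms(2) by simp
  also have "\<dots> \<le> g t (real n * h0 + h0)"
    using assms step by (intro sup) auto
  also have "\<dots> = g t (real (Suc n) * h0)" by (simp add: algebra_simps)
  finally show ?case by (simp add: algebra_simps)
qed

definition "C t = Limsup at_top (\<lambda>h. ereal (g t h / h))"
definition "D t = Liminf at_top (\<lambda>h. ereal (g t h / h))"

lemma C_le:
  assumes "T < t" "t < s"
  shows "C s \<le> C t"
  unfolding C_def[of s]
proof (rule Limsup_leI)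
  fix r assume "C t < ereal r"
  then obtain r0 where r0: "C t < ereal r0" "ereal r0 < ereal r" using ereal_dense2 by blast
  define d where "d = s - t"
  have d: "0 < d" "s = t + d" using assms by (auto simp: d_def)
  have E1: "eventually (\<lambda>h. ereal (g t h / h) < ereal r0) at_top"
    using Limsup_lessD[OF r0(1)[unfolded C_def]] .
  have E1': "eventually (\<lambda>h. g t (d + h) / (d + h) < r0) at_top"
    using ev_shift[OF E1, of d] by simp
  have E3: "eventually (\<lambda>h. r0 * d - g t d + S < (r - r0) * h) at_top"
    using r0 by (intro ev_lin) simp
  show "eventually (\<lambda>h. ereal (g s h / h) < ereal r) at_top"
    using E1' E3 eventually_gt_at_top[of 0]
  proof eventually_elim
    case (elim h)
    have "g (t + d) h + g t d - S \<le> g t (d + h)" using assms d elim by (intro sup) auto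
    moreover have "g t (d + h) < r0 * (d + h)" using elim d by (simp add: pos_divide_less_eq)
    ultimately have "g s h < r * h" using elim d by (simp add: algebra_simps)
    thus ?case using elim by (simp add: pos_divide_less_eq)
  qed
qed

lemma C_ge:
  assumes "T < t" "t < s"
  shows "C t \<le> C s"
  unfolding C_def[of t]
proof (rule Limsup_leI)
  fix r assume "C s < ereal r"
  then obtain r0 where r0: "C s < ereal r0" "ereal r0 < ereal r" using ereal_dense2 by blast
  define d where "d = s - t"
  have d: "0 < d" "s = t + d" using assms by (auto simp: d_def)
  have E1: "eventually (\<lambda>h. ereal (g s h / h) < ereal r0) at_top"
    using Limsup_lessD[OF r0(1)[unfolded C_def]] .
  have E1': "eventually (\<lambda>k. g s (- d + k) / (- d + k) < r0) at_top"
    using ev_shift[OF E1, of "-d"] by simp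
  have E3: "eventually (\<lambda>k. - r0 * d + g t d + S < (r - r0) * k) at_top"
    using r0 by (intro ev_lin) simp
  show "eventually (\<lambda>h. ereal (g t h / h) < ereal r) at_top"
    using E1' E3 eventually_gt_at_top[of d]
  proof eventually_elim
    case (elim k)
    have "g t (d + (k - d)) \<le> g (t + d) (k - d) + g t d + S" using assms d elim by (intro sub) auto
    moreover have "g s (k - d) < r0 * (k - d)" using elim d by (simp add: pos_divide_less_eq)
    ultimately have "g t k < r * k" using elim d by (simp add: algebra_simps)
    thus ?case using elim d by (simp add: pos_divide_less_eq)
  qed
qed

lemma D_ge:
  assumes "T < t" "t < s"
  shows "D t \<le> D s"
  unfolding D_def[of s]
proof (rule Liminf_geI)
  fix r assume "ereal r < D t"
  then obtain r0 where r0: "ereal r < ereal r0" "ereal r0 < D t" using ereal_dense2 by blast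
  define d where "d = s - t"
  have d: "0 < d" "s = t + d" using assms by (auto simp: d_def)
  have E1: "eventually (\<lambda>h. ereal r0 < ereal (g t h / h)) at_top"
    using less_LiminfD[OF r0(2)[unfolded D_def]] .
  have E1': "eventually (\<lambda>h. r0 < g t (d + h) / (d + h)) at_top"
    using ev_shift[OF E1, of d] by simp
  have E3: "eventually (\<lambda>h. - r0 * d + g t d + S < (r0 - r) * h) at_top"
    using r0 by (intro ev_lin) simp
  show "eventually (\<lambda>h. ereal r < ereal (g s h / h)) at_top"
    using E1' E3 eventually_gt_at_top[of 0]
  proof eventually_elim
    case (elim h)
    have "g t (d + h) \<le> g (t + d) h + g t d + S" using assms d elim by (intro sub) auto
    moreover have "r0 * (d + h) < g t (d + h)" using elim d by (simp add: pos_less_divide_eq)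
    ultimately have "r * h < g s h" using elim d by (simp add: algebra_simps)
    thus ?case using elim by (simp add: pos_less_divide_eq)
  qed
qed

lemma D_le:
  assumes "T < t" "t < s"
  shows "D s \<le> D t"
  unfolding D_def[of t]
proof (rule Liminf_geI)
  fix r assume "ereal r < D s"
  then obtain r0 where r0: "ereal r < ereal r0" "ereal r0 < D s" using ereal_dense2 by blast
  define d where "d = s - t"
  have d: "0 < d" "s = t + d" using assms by (auto simp: d_def)
  have E1: "eventually (\<lambda>h. ereal r0 < ereal (g s h / h)) at_top"
    using less_LiminfD[OF r0(2)[unfolded D_def]] .
  have E1': "eventually (\<lambda>k. r0 < g s (- d + k) / (- d + k)) at_top"
    using ev_shift[OF E1, of "-d"] by simp
  have E3: "eventually (\<lambda>k. r0 * d - g t d + S < (r0 - r) * k) at_top"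
    using r0 by (intro ev_lin) simp
  show "eventually (\<lambda>h. ereal r < ereal (g t h / h)) at_top"
    using E1' E3 eventually_gt_at_top[of d]
  proof eventually_elim
    case (elim k)
    have "g (t + d) (k - d) + g t d - S \<le> g t (d + (k - d))" using assms d elim by (intro sup) auto
    moreover have "r0 * (k - d) < g s (k - d)" using elim d by (simp add: pos_less_divide_eq)
    ultimately have "r * k < g t k" using elim d by (simp add: algebra_simps)
    thus ?case using elim d by (simp add: pos_less_divide_eq)
  qed
qed

lemma C_const: "T < t \<Longrightarrow> T < s \<Longrightarrow> C t = C s"
  by (metis C_ge C_le antisym linorder_neq_iff)
lemma D_const: "T < t \<Longrightarrow> T < s \<Longrightarrow> D t = D s"
  by (metis D_ge D_le antisym linorder_neq_iff)

definition "G h = Limsup at_top (\<lambda>t. ereal (g t h))"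
definition "H h = Liminf at_top (\<lambda>t. ereal (g t h))"

lemma upper_from:
  assumes h0: "0 < h0" and b: "G h0 < ereal b"
  shows "\<exists>t1>T. \<forall>t\<ge>t1. \<forall>h>0. g t h \<le> (h/h0 + 1) * (b + S)"
proof -
  have "eventually (\<lambda>t. ereal (g t h0) < ereal b) at_top"
    using Limsup_lessD[OF b[unfolded G_def]] .
  then obtain N where N: "\<And>t. t \<ge> N \<Longrightarrow> g t h0 < b"
    unfolding eventually_at_top_linorder by auto
  define t1 where "t1 = max N (T + 1)"
  show ?thesis
  proof (intro exI[of _ t1] conjI allI impI)
    show "T < t1" by (simp add: t1_def)
    fix t h :: real assume t: "t1 \<le> t" and h: "0 < h"
    have tT: "T < t" using t by (simp add: t1_def)
    have bS: "0 < b + S" using N[of t] lower[OF tT h0] t by (simp add: t1_def)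
    define n where "n = nat \<lceil>h/h0\<rceil>"
    have hp: "0 < h/h0" using h h0 by simp
    have rn: "real n = real_of_int \<lceil>h/h0\<rceil>" unfolding n_def using hp by simp
    have hn: "h/h0 \<le> real n" "real n < h/h0 + 1" unfolding rn by linarith+
    have n1: "1 \<le> n" using hn(1) hp by linarith
    have hnh: "h \<le> real n * h0" using hn(1) h0 by (simp add: field_simps)
    have "g t h \<le> g t (real n * h0)" using tT h hnh by (intro mono) auto
    also have "\<dots> \<le> real n * (b + S) - S"
    proof (rule iter_sub[OF tT h0 _ n1])
      fix s assume "t \<le> s"
      hence "N \<le> s" using t by (simp add: t1_def)
      thus "g s h0 \<le> b" using N by (simp add: less_imp_le)
    qed
    also have "\<dots> \<le> (h/h0 + 1) * (b + S)"
      using hn bS S0 by (smt (verit) mult_right_mono)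
    finally show "g t h \<le> (h/h0 + 1) * (b + S)" .
  qed
qed

lemma lower_from:
  assumes h0: "0 < h0" and b: "ereal b < H h0" and bS: "S \<le> b"
  shows "\<exists>t1>T. \<forall>t\<ge>t1. \<forall>h\<ge>h0. (h/h0 - 1) * (b - S) + S \<le> g t h"
proof -
  have "eventually (\<lambda>t. ereal b < ereal (g t h0)) at_top"
    using less_LiminfD[OF b[unfolded H_def]] .
  then obtain N where N: "\<And>t. t \<ge> N \<Longrightarrow> b < g t h0"
    unfolding eventually_at_top_linorder by auto
  define t1 where "t1 = max N (T + 1)"
  show ?thesis
  proof (intro exI[of _ t1] conjI allI impI)
    show "T < t1" by (simp add: t1_def)
    fix t h :: real assume t: "t1 \<le> t" and h: "h0 \<le> h"
    have tT: "T < t" using t by (simp add: t1_def)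
    define n where "n = nat \<lfloor>h/h0\<rfloor>"
    have "1 \<le> h/h0" using h h0 by (simp add: field_simps)
    hence rn: "real n = real_of_int \<lfloor>h/h0\<rfloor>" unfolding n_def by simp
    have hn: "real n \<le> h/h0" "h/h0 - 1 < real n" unfolding rn by linarith+
    have n1: "1 \<le> n" using hn \<open>1 \<le> h/h0\<close> by linarith
    have hnh: "real n * h0 \<le> h" using hn(1) h0 by (simp add: field_simps)
    have "(h/h0 - 1) * (b - S) + S \<le> real n * (b - S) + S"
      using hn bS by (smt (verit) mult_right_mono)
    also have "\<dots> \<le> g t (real n * h0)"
    proof (rule iter_sup[OF tT h0 _ n1])
      fix s assume "t \<le> s"
      hence "N \<le> s" using t by (simp add: t1_def)
      thus "b \<le> g s h0" using N by (simp add: less_imp_le)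
    qed
    also have "\<dots> \<le> g t h" using tT h0 hnh n1 by (intro mono) auto
    finally show "(h/h0 - 1) * (b - S) + S \<le> g t h" .
  qed
qed

lemma ev_T: "eventually (\<lambda>t. T < t) at_top" by (rule eventually_gt_at_top)

lemma G_lb: assumes h: "0 < h" shows "ereal (- S) \<le> G h"
  unfolding G_def
proof (rule le_Limsup)
  show "eventually (\<lambda>t. ereal (- S) \<le> ereal (g t h)) at_top"
    using ev_T by eventually_elim (simp add: lower h)
qed simp

lemma H_lb: assumes h: "0 < h" shows "ereal (- S) \<le> H h"
  unfolding H_def
proof (rule Liminf_bounded)
  show "eventually (\<lambda>t. ereal (- S) \<le> ereal (g t h)) at_top"
    using ev_T by eventually_elim (simp add: lower h)
qed

lemma H_mono: assumes "0 < h" "h \<le> k" shows "H h \<le> H k"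
  unfolding H_def
proof (rule Liminf_mono)
  show "eventually (\<lambda>t. ereal (g t h) \<le> ereal (g t k)) at_top"
    using ev_T by eventually_elim (use assms in \<open>simp add: mono\<close>)
qed

lemma A_eq: assumes "0 < h" shows "Limsup at_top (\<lambda>t. ereal (g t h / h)) = G h * ereal (1/h)"
proof -
  have "Limsup at_top (\<lambda>t. ereal (g t h) * ereal (1/h)) = G h * ereal (1/h)"
    unfolding G_def by (rule Limsup_ereal_mult_right) (use assms in auto)
  thus ?thesis by (simp add: divide_inverse)
qed

lemma B_eq: assumes "0 < h" shows "Liminf at_top (\<lambda>t. ereal (g t h / h)) = H h * ereal (1/h)"
proof -
  have "Liminf at_top (\<lambda>t. ereal (g t h) * ereal (1/h)) = H h * ereal (1/h)"
    unfolding H_def by (rule Liminf_ereal_mult_right) (use assms in auto)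
  thus ?thesis by (simp add: divide_inverse)
qed

lemma upper_X:
  assumes h0: "0 < h0" and a: "G h0 = ereal a" and r: "(a + S) / h0 < r"
  shows "\<exists>t1>T. \<exists>N r'. r' < r \<and> (\<forall>t\<ge>t1. \<forall>h\<ge>N. 0 < h \<and> g t h / h \<le> r')"
proof -
  have aS: "- S \<le> a" using G_lb[OF h0] a by simp
  define \<delta> where "\<delta> = (r * h0 - a - S) / 2"
  have dpos: "0 < \<delta>" using r h0 by (simp add: \<delta>_def field_simps)
  define b where "b = a + \<delta>"
  have bS: "0 < b + S" using aS dpos by (simp add: b_def)
  define r0 where "r0 = (b + S) / h0"
  have r0r: "r0 < r" using h0 dpos unfolding r0_def b_def \<delta>_def by (simp add: field_simps)
  have "G h0 < ereal b" using a dpos by (simp add: b_def)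
  from upper_from[OF h0 this] obtain t1 where t1: "T < t1"
    "\<And>t h. t1 \<le> t \<Longrightarrow> 0 < h \<Longrightarrow> g t h \<le> (h/h0 + 1) * (b + S)" by blast
  define N where "N = 2 * (b + S) / (r - r0) + 1"
  have Npos: "0 < N" using bS r0r unfolding N_def by (smt (verit) divide_pos_pos)
  show ?thesis
  proof (rule exI[of _ t1], rule conjI[OF t1(1)], rule exI[of _ N], rule exI[of _ "(r0 + r)/2"], intro conjI allI impI)
    show "(r0 + r)/2 < r" using r0r by auto
    fix t h assume t: "t1 \<le> t" and hN: "N \<le> h"
    show hp: "0 < h" using Npos hN by simp
    have "g t h \<le> (h/h0 + 1) * (b + S)" using t1(2)[OF t hp] .
    hence "g t h / h \<le> r0 + (b + S) / h"
      using hp h0 by (simp add: r0_def field_simps)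
    moreover have "(b + S) / h \<le> (r - r0) / 2"
    proof -
      have "2 * (b + S) / (r - r0) \<le> h" using hN by (simp add: N_def)
      hence "2 * (b + S) \<le> h * (r - r0)" using r0r by (simp add: field_simps)
      thus ?thesis using hp by (simp add: field_simps)
    qed
    ultimately show "g t h / h \<le> (r0 + r)/2" by (rule aux1)
  qed
qed

lemma lower_X:
  assumes h0: "0 < h0" and a: "ereal a \<le> H h0" and r: "r < (a - S) / h0"
  shows "\<exists>t1>T. \<exists>N r'. r < r' \<and> (\<forall>t\<ge>t1. \<forall>h\<ge>N. 0 < h \<and> r' \<le> g t h / h)"
proof (cases "r < 0")
  case True
  define N where "N = 2 * (S / (- r)) + 1"
  have "0 \<le> S / (- r)" using True S0 by (intro divide_nonneg_pos) auto
  hence Npos: "0 < N" unfolding N_def by linarith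
  show ?thesis
  proof (rule exI[of _ "T + 1"], rule conjI, simp, rule exI[of _ N], rule exI[of _ "r/2"], intro conjI allI impI)
    show "r < r/2" using True by simp
    fix t h assume t: "T + 1 \<le> t" and hN: "N \<le> h"
    show hp: "0 < h" using Npos hN by simp
    have "- S \<le> g t h" using lower[OF _ hp] t by simp
    moreover have "S / h \<le> - r / 2"
    proof -
      have "2 * (S / (- r)) \<le> h" using hN unfolding N_def by linarith
      hence "2 * S \<le> h * (- r)" using True by (simp add: field_simps)
      thus ?thesis using hp by (simp add: field_simps)
    qed
    moreover have "- S / h \<le> g t h / h" using hp \<open>- S \<le> g t h\<close> by (intro divide_right_mono) auto
    moreover have "- S / h = - (S / h)" by simp
    ultimately show "r/2 \<le> g t h / h" by linarith
  qed
next
  case False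
  define \<delta> where "\<delta> = (a - S - r * h0) / 2"
  have dpos: "0 < \<delta>" using r h0 by (simp add: \<delta>_def field_simps)
  define b where "b = a - \<delta>"
  define r0 where "r0 = (b - S) / h0"
  have r0r: "r < r0" using h0 dpos unfolding r0_def b_def \<delta>_def by (simp add: field_simps)
  have "r * h0 < b - S" using r0r h0 unfolding r0_def by (simp add: field_simps)
  moreover have "0 \<le> r * h0" using False h0 by simp
  ultimately have bS: "S < b" by linarith
  have "ereal b < ereal a" using dpos by (simp add: b_def)
  hence "ereal b < H h0" using a by (rule less_le_trans)
  from lower_from[OF h0 this] bS obtain t1 where t1: "T < t1"
    "\<And>t h. t1 \<le> t \<Longrightarrow> h0 \<le> h \<Longrightarrow> (h/h0 - 1) * (b - S) + S \<le> g t h" by fastforce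
  define N where "N = max h0 (2 * (b - S) / (r0 - r) + 1)"
  have Npos: "0 < N" using h0 by (simp add: N_def)
  show ?thesis
  proof (rule exI[of _ t1], rule conjI[OF t1(1)], rule exI[of _ N], rule exI[of _ "(r0 + r)/2"], intro conjI allI impI)
    show "r < (r0 + r)/2" using r0r by auto
    fix t h assume t: "t1 \<le> t" and hN: "N \<le> h"
    show hp: "0 < h" using Npos hN by simp
    have "(h/h0 - 1) * (b - S) + S \<le> g t h" using t1(2)[OF t] hN by (simp add: N_def)
    moreover have "(h/h0 - 1) * (b - S) + S = h * r0 - (b - S) + S"
      using h0 by (simp add: r0_def field_simps)
    ultimately have "h * r0 - (b - S) \<le> g t h" using S0 by linarith
    moreover have "(b - S) / h * h = b - S" using hp by simp
    hence "(r0 - (b - S) / h) * h = h * r0 - (b - S)" by (simp add: left_diff_distrib)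
    ultimately have "(r0 - (b - S) / h) * h \<le> g t h" by simp
    hence "r0 - (b - S) / h \<le> g t h / h" using hp by (simp add: pos_le_divide_eq)
    moreover have "(b - S) / h \<le> (r0 - r) / 2"
    proof -
      have "2 * (b - S) / (r0 - r) \<le> h" using hN by (simp add: N_def)
      hence "2 * (b - S) \<le> h * (r0 - r)" using r0r by (simp add: field_simps)
      thus ?thesis using hp by (simp add: field_simps)
    qed
    ultimately show "(r0 + r)/2 \<le> g t h / h" by (rule aux2)
  qed
qed

lemma G_fin_all: assumes h: "0 < h" and Gh: "G h \<noteq> \<infinity>" and k: "0 < k" shows "G k \<noteq> \<infinity>"
proof -
  have "G h \<noteq> - \<infinity>" using G_lb[OF h] by auto
  with Gh obtain a where a: "G h = ereal a" by (cases "G h") auto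
  have "G h < ereal (a + 1)" using a by simp
  from upper_from[OF h this] obtain t1 where t1: "T < t1"
    "\<forall>t\<ge>t1. \<forall>h'>0. g t h' \<le> (h'/h + 1) * (a + 1 + S)" by blast
  have "G k \<le> ereal ((k/h + 1) * (a + 1 + S))"
    unfolding G_def
  proof (rule Limsup_bounded)
    show "eventually (\<lambda>t. ereal (g t k) \<le> ereal ((k/h + 1) * (a + 1 + S))) at_top"
      using eventually_ge_at_top[of t1] by eventually_elim (use t1 k in auto)
  qed
  thus ?thesis by auto
qed

lemma partA:
  "\<exists>L. ((\<lambda>h. Limsup at_top (\<lambda>t. ereal (g t h / h))) \<longlongrightarrow> L) at_top
     \<and> (\<bar>L\<bar> = \<infinity> \<longleftrightarrow> (\<exists>h>0. \<bar>G h\<bar> = \<infinity>))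
     \<and> (\<bar>L\<bar> = \<infinity> \<longleftrightarrow> (\<forall>h>0. \<bar>G h\<bar> = \<infinity>))
     \<and> C (T + 1) \<le> L"
proof (cases "\<exists>h>0. G h = \<infinity>")
  case True
  then obtain h0 where h0: "0 < h0" "G h0 = \<infinity>" by blast
  have allinf: "\<And>h. 0 < h \<Longrightarrow> G h = \<infinity>" using G_fin_all h0 by blast
  have ev: "eventually (\<lambda>h. \<infinity> = Limsup at_top (\<lambda>t. ereal (g t h / h))) at_top"
    using eventually_gt_at_top[of 0]
  proof eventually_elim
    case (elim h)
    have "ereal (1/h) > 0" using elim by simp
    thus ?case using A_eq[OF elim] allinf[OF elim] by simp
  qed
  show ?thesis
    by (rule exI[of _ \<infinity>]) (use Lim_transform_eventually[OF tendsto_const ev] h0 allinf in auto)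
next
  case False
  hence allfin: "\<And>h. 0 < h \<Longrightarrow> G h \<noteq> \<infinity>" by blast
  define Gr where "Gr h = real_of_ereal (G h)" for h
  have Gr: "G h = ereal (Gr h)" if "0 < h" for h
  proof -
    have "G h \<noteq> - \<infinity>" using G_lb[OF that] by auto
    thus ?thesis using allfin[OF that] unfolding Gr_def by (cases "G h") auto
  qed
  have GrS: "- S \<le> Gr h" if "0 < h" for h using G_lb[OF that] Gr[OF that] by simp
  have Aeq: "Limsup at_top (\<lambda>t. ereal (g t h / h)) = ereal (Gr h / h)" if "0 < h" for h
    using A_eq[OF that] Gr[OF that] by (simp add: divide_inverse)
  define X where "X = (INF h\<in>{0<..}. ereal ((Gr h + S) / h))"
  have Xlow: "X \<le> ereal ((Gr h + S) / h)" if "0 < h" for h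
    unfolding X_def using that by (intro INF_lower) auto
  have X0: "0 \<le> X" unfolding X_def
  proof (rule INF_greatest)
    fix h :: real assume "h \<in> {0<..}"
    hence "0 < h" by simp
    thus "0 \<le> ereal ((Gr h + S) / h)" using GrS[of h] by simp
  qed
  have "X \<noteq> \<infinity>" using Xlow[of 1] by auto
  with X0 obtain x where x: "X = ereal x" by (cases X) auto
  have key: "\<exists>t1>T. \<exists>N r'. r' < r \<and> (\<forall>t\<ge>t1. \<forall>h\<ge>N. 0 < h \<and> g t h / h \<le> r')"
    if "X < ereal r" for r
  proof -
    from that obtain h0 where h0: "h0 \<in> {0<..}" "ereal ((Gr h0 + S) / h0) < ereal r"
      unfolding X_def INF_less_iff by blast
    show ?thesis using upper_X[of h0 "Gr h0" r] h0 Gr[of h0] by simp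
  qed
  have tends: "((\<lambda>h. Limsup at_top (\<lambda>t. ereal (g t h / h))) \<longlongrightarrow> X) at_top"
  proof (rule sandwich_conv)
    show "Limsup at_top (\<lambda>h. Limsup at_top (\<lambda>t. ereal (g t h / h))) \<le> X"
    proof (rule Limsup_leI)
      fix r assume "X < ereal r"
      from key[OF this] obtain t1 N r' where k: "r' < r" "\<forall>t\<ge>t1. \<forall>h\<ge>N. 0 < h \<and> g t h / h \<le> r'"
        by blast
      show "eventually (\<lambda>h. Limsup at_top (\<lambda>t. ereal (g t h / h)) < ereal r) at_top"
        using eventually_ge_at_top[of N]
      proof eventually_elim
        case (elim h)
        have "Limsup at_top (\<lambda>t. ereal (g t h / h)) \<le> ereal r'"
          by (rule Limsup_bounded, rule eventually_mono[OF eventually_ge_at_top[of t1]])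
             (use k elim in auto)
        moreover have "ereal r' < ereal r" using k by simp
        ultimately show ?case by (rule le_less_trans)
      qed
    qed
  next
    show "X \<le> Liminf at_top (\<lambda>h. Limsup at_top (\<lambda>t. ereal (g t h / h)))"
    proof (rule Liminf_geI)
      fix r assume "ereal r < X"
      hence rx: "0 < x - r" using x by simp
      show "eventually (\<lambda>h. ereal r < Limsup at_top (\<lambda>t. ereal (g t h / h))) at_top"
        using eventually_gt_at_top[of 0] ev_inv_small[OF rx, of S]
      proof eventually_elim
        case (elim h)
        have "x \<le> (Gr h + S) / h" using Xlow[OF elim(1)] x by simp
        also have "\<dots> = Gr h / h + S / h" by (simp add: add_divide_distrib)
        finally have "r < Gr h / h" using elim(2) S0 by simp
        thus ?case using Aeq[OF elim(1)] by simp
      qed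
    qed
  qed
  have CX: "C (T + 1) \<le> X"
  proof (rule le_by_dense)
    fix r assume "X < ereal r"
    from key[OF this] obtain t1 N r' where k: "T < t1" "r' < r" "\<forall>t\<ge>t1. \<forall>h\<ge>N. 0 < h \<and> g t h / h \<le> r'"
      by blast
    have "C t1 \<le> ereal r'" unfolding C_def
      by (rule Limsup_bounded, rule eventually_mono[OF eventually_ge_at_top[of N]])
         (use k in auto)
    moreover have "C (T + 1) = C t1" using k(1) by (intro C_const) auto
    moreover have "ereal r' \<le> ereal r" using k(2) by simp
    ultimately show "C (T + 1) \<le> ereal r" by (metis order.trans)
  qed
  show ?thesis
  proof (rule exI[of _ X], intro conjI)
    show "((\<lambda>h. Limsup at_top (\<lambda>t. ereal (g t h / h))) \<longlongrightarrow> X) at_top" by (rule tends)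
    show "C (T + 1) \<le> X" by (rule CX)
    show "(\<bar>X\<bar> = \<infinity>) = (\<exists>h>0. \<bar>G h\<bar> = \<infinity>)" using x Gr by auto
    have "\<bar>G 1\<bar> \<noteq> \<infinity>" using Gr[of 1] by simp
    hence "\<not> (\<forall>h>0. \<bar>G h\<bar> = \<infinity>)" by (metis zero_less_one)
    thus "(\<bar>X\<bar> = \<infinity>) = (\<forall>h>0. \<bar>G h\<bar> = \<infinity>)" using x by simp
  qed
qed

lemma partB:
  "\<exists>L. ((\<lambda>h. Liminf at_top (\<lambda>t. ereal (g t h / h))) \<longlongrightarrow> L) at_top \<and> L \<le> D (T + 1)"
proof (cases "\<exists>h>0. H h = \<infinity>")
  case True
  then obtain h0 where h0: "0 < h0" "H h0 = \<infinity>" by blast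
  have ev: "eventually (\<lambda>h. \<infinity> = Liminf at_top (\<lambda>t. ereal (g t h / h))) at_top"
    using eventually_ge_at_top[of h0]
  proof eventually_elim
    case (elim h)
    have hp: "0 < h" using elim h0 by simp
    have "H h = \<infinity>" using H_mono[OF h0(1) elim] h0 by simp
    moreover have "ereal (1/h) > 0" using hp by simp
    ultimately show ?case using B_eq[OF hp] by simp
  qed
  have "\<infinity> \<le> D (T + 1)"
  proof (rule ge_by_dense)
    fix r :: real
    have "r < (((r + 1) * h0 + S) - S) / h0" using h0 by (simp add: field_simps)
    from lower_X[OF h0(1) _ this] h0 obtain t1 N r' where
      k: "T < t1" "r < r'" "\<forall>t\<ge>t1. \<forall>h\<ge>N. 0 < h \<and> r' \<le> g t h / h" by auto
    have "ereal r' \<le> D t1" unfolding D_def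
      by (rule Liminf_bounded, rule eventually_mono[OF eventually_ge_at_top[of N]])
         (use k in auto)
    moreover have "D (T + 1) = D t1" using k(1) by (intro D_const) auto
    moreover have "ereal r \<le> ereal r'" using k(2) by simp
    ultimately show "ereal r \<le> D (T + 1)" by (metis order.trans)
  qed
  thus ?thesis
    by (intro exI[of _ \<infinity>] conjI Lim_transform_eventually[OF tendsto_const ev])
next
  case False
  hence allfin: "\<And>h. 0 < h \<Longrightarrow> H h \<noteq> \<infinity>" by blast
  define Hr where "Hr h = real_of_ereal (H h)" for h
  have Hr: "H h = ereal (Hr h)" if "0 < h" for h
  proof -
    have "H h \<noteq> - \<infinity>" using H_lb[OF that] by auto
    thus ?thesis using allfin[OF that] unfolding Hr_def by (cases "H h") auto
  qed
  have Beq: "Liminf at_top (\<lambda>t. ereal (g t h / h)) = ereal (Hr h / h)" if "0 < h" for h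
    using B_eq[OF that] Hr[OF that] by (simp add: divide_inverse)
  define X where "X = (SUP h\<in>{0<..}. ereal ((Hr h - S) / h))"
  have Xup: "ereal ((Hr h - S) / h) \<le> X" if "0 < h" for h
    unfolding X_def using that by (intro SUP_upper) auto
  have key: "\<exists>t1>T. \<exists>N r'. r < r' \<and> (\<forall>t\<ge>t1. \<forall>h\<ge>N. 0 < h \<and> r' \<le> g t h / h)"
    if "ereal r < X" for r
  proof -
    from that obtain h0 where h0: "h0 \<in> {0<..}" "ereal r < ereal ((Hr h0 - S) / h0)"
      unfolding X_def less_SUP_iff by blast
    show ?thesis using lower_X[of h0 "Hr h0" r] h0 Hr[of h0] by simp
  qed
  have tends: "((\<lambda>h. Liminf at_top (\<lambda>t. ereal (g t h / h))) \<longlongrightarrow> X) at_top"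
  proof (rule sandwich_conv)
    show "X \<le> Liminf at_top (\<lambda>h. Liminf at_top (\<lambda>t. ereal (g t h / h)))"
    proof (rule Liminf_geI)
      fix r assume "ereal r < X"
      from key[OF this] obtain t1 N r' where k: "r < r'" "\<forall>t\<ge>t1. \<forall>h\<ge>N. 0 < h \<and> r' \<le> g t h / h"
        by blast
      show "eventually (\<lambda>h. ereal r < Liminf at_top (\<lambda>t. ereal (g t h / h))) at_top"
        using eventually_ge_at_top[of N]
      proof eventually_elim
        case (elim h)
        have "ereal r' \<le> Liminf at_top (\<lambda>t. ereal (g t h / h))"
          by (rule Liminf_bounded, rule eventually_mono[OF eventually_ge_at_top[of t1]])
             (use k elim in auto)
        moreover have "ereal r < ereal r'" using k by simp
        ultimately show ?case by (metis less_le_trans)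
      qed
    qed
  next
    show "Limsup at_top (\<lambda>h. Liminf at_top (\<lambda>t. ereal (g t h / h))) \<le> X"
    proof (rule Limsup_leI)
      fix r assume rX: "X < ereal r"
      have "X \<noteq> - \<infinity>" using Xup[of 1] by auto
      moreover have "X \<noteq> \<infinity>" using rX by auto
      ultimately obtain x where x: "X = ereal x" by (cases X) auto
      hence rx: "0 < r - x" using rX by simp
      show "eventually (\<lambda>h. Liminf at_top (\<lambda>t. ereal (g t h / h)) < ereal r) at_top"
        using eventually_gt_at_top[of 0] ev_inv_small[OF rx, of S]
      proof eventually_elim
        case (elim h)
        have "(Hr h - S) / h \<le> x" using Xup[OF elim(1)] x by simp
        moreover have "(Hr h - S) / h = Hr h / h - S / h" by (simp add: diff_divide_distrib)
        ultimately have "Hr h / h < r" using elim(2) S0 by simp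
        thus ?case using Beq[OF elim(1)] by simp
      qed
    qed
  qed
  have XD: "X \<le> D (T + 1)"
  proof (rule ge_by_dense)
    fix r assume "ereal r < X"
    from key[OF this] obtain t1 N r' where k: "T < t1" "r < r'" "\<forall>t\<ge>t1. \<forall>h\<ge>N. 0 < h \<and> r' \<le> g t h / h"
      by blast
    have "ereal r' \<le> D t1" unfolding D_def
      by (rule Liminf_bounded, rule eventually_mono[OF eventually_ge_at_top[of N]])
         (use k in auto)
    moreover have "D (T + 1) = D t1" using k(1) by (intro D_const) auto
    moreover have "ereal r \<le> ereal r'" using k(2) by simp
    ultimately show "ereal r \<le> D (T + 1)" by (metis order.trans)
  qed
  show ?thesis using tends XD by blast
qed

end
theorem proposition5p2:
  fixes g :: "real \<Rightarrow> real \<Rightarrow> real"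
  assumes mono: "\<And>t h k. 0 < t \<Longrightarrow> 0 \<le> h \<Longrightarrow> h \<le> k \<Longrightarrow> g t h \<le> g t k"
    and bdd: "\<exists>t0. \<exists>S::real. \<forall>t h k. t > t0 \<and> t > 0 \<and> h > 0 \<and> k > 0 \<longrightarrow>
               \<bar>g t (h + k) - g (t + h) k - g t h\<bar> \<le> S"
  shows
    \<comment> \<open>(i)\<close>
    "(\<exists>L. ((\<lambda>h. Limsup at_top (\<lambda>t. ereal (g t h / h))) \<longlongrightarrow> L) at_top)
     \<and> (\<exists>L. ((\<lambda>h. Liminf at_top (\<lambda>t. ereal (g t h / h))) \<longlongrightarrow> L) at_top)
     \<comment> \<open>(ii)\<close>
     \<and> (\<exists>L1 L2. ((\<lambda>t. Limsup at_top (\<lambda>h. ereal (g t h / h))) \<longlongrightarrow> L1) at_top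
             \<and> ((\<lambda>h. Limsup at_top (\<lambda>t. ereal (g t h / h))) \<longlongrightarrow> L2) at_top
             \<and> L1 \<le> L2)
     \<and> (\<exists>L1 L2. ((\<lambda>t. Liminf at_top (\<lambda>h. ereal (g t h / h))) \<longlongrightarrow> L1) at_top
             \<and> ((\<lambda>h. Liminf at_top (\<lambda>t. ereal (g t h / h))) \<longlongrightarrow> L2) at_top
             \<and> L1 \<ge> L2)
     \<comment> \<open>(iii)\<close>
     \<and> (\<exists>L. ((\<lambda>h. Limsup at_top (\<lambda>t. ereal (g t h / h))) \<longlongrightarrow> L) at_top
          \<and> (\<bar>L\<bar> = \<infinity> \<longleftrightarrow> (\<exists>h>0. \<bar>Limsup at_top (\<lambda>t. ereal (g t h))\<bar> = \<infinity>))
          \<and> (\<bar>L\<bar> = \<infinity> \<longleftrightarrow> (\<forall>h>0. \<bar>Limsup at_top (\<lambda>t. ereal (g t h))\<bar> = \<infinity>)))"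
proof -
  from bdd obtain t0 S where b: "\<forall>t h k. t > t0 \<and> t > 0 \<and> h > 0 \<and> k > 0 \<longrightarrow>
               \<bar>g t (h + k) - g (t + h) k - g t h\<bar> \<le> S" by blast
  define T where "T = max t0 0"
  define S' where "S' = max S 0"
  interpret P: P52 g T S'
  proof
    show "0 \<le> T" "0 \<le> S'" by (simp_all add: T_def S'_def)
    fix t h k :: real
    { assume "T < t" "0 \<le> h" "h \<le> k"
      thus "g t h \<le> g t k" using mono[of t h k] by (simp add: T_def) }
    { assume a: "T < t" "0 < h" "0 < k"
      hence "\<bar>g t (h + k) - g (t + h) k - g t h\<bar> \<le> S" using b by (simp add: T_def)
      thus "g t (h + k) \<le> g (t + h) k + g t h + S'" "g (t + h) k + g t h - S' \<le> g t (h + k)"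
        by (auto simp: S'_def abs_le_iff) }
  qed
  from P.partA obtain LA where LA0: "((\<lambda>h. Limsup at_top (\<lambda>t. ereal (g t h / h))) \<longlongrightarrow> LA) at_top
     \<and> (\<bar>LA\<bar> = \<infinity> \<longleftrightarrow> (\<exists>h>0. \<bar>P.G h\<bar> = \<infinity>))
     \<and> (\<bar>LA\<bar> = \<infinity> \<longleftrightarrow> (\<forall>h>0. \<bar>P.G h\<bar> = \<infinity>))
     \<and> P.C (T + 1) \<le> LA" by (rule exE)
  note LA = LA0[THEN conjunct1] LA0[THEN conjunct2, THEN conjunct1]
    LA0[THEN conjunct2, THEN conjunct2, THEN conjunct1] LA0[THEN conjunct2, THEN conjunct2, THEN conjunct2]
  from P.partB obtain LB where LB0: "((\<lambda>h. Liminf at_top (\<lambda>t. ereal (g t h / h))) \<longlongrightarrow> LB) at_top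
     \<and> LB \<le> P.D (T + 1)" by (rule exE)
  note LB = LB0[THEN conjunct1] LB0[THEN conjunct2]
  have evT: "eventually (\<lambda>t. T < t) at_top" by (rule eventually_gt_at_top)
  have Ct: "((\<lambda>t. Limsup at_top (\<lambda>h. ereal (g t h / h))) \<longlongrightarrow> P.C (T + 1)) at_top"
  proof (rule Lim_transform_eventually[OF tendsto_const])
    show "eventually (\<lambda>t. P.C (T + 1) = Limsup at_top (\<lambda>h. ereal (g t h / h))) at_top"
      using evT
    proof eventually_elim
      case (elim t)
      have "P.C (T + 1) = P.C t" by (rule P.C_const) (use elim in auto)
      thus ?case by (simp add: P.C_def)
    qed
  qed
  have Dt: "((\<lambda>t. Liminf at_top (\<lambda>h. ereal (g t h / h))) \<longlongrightarrow> P.D (T + 1)) at_top"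
  proof (rule Lim_transform_eventually[OF tendsto_const])
    show "eventually (\<lambda>t. P.D (T + 1) = Liminf at_top (\<lambda>h. ereal (g t h / h))) at_top"
      using evT
    proof eventually_elim
      case (elim t)
      have "P.D (T + 1) = P.D t" by (rule P.D_const) (use elim in auto)
      thus ?case by (simp add: P.D_def)
    qed
  qed
  note LA' = LA[unfolded P.G_def]
  show ?thesis
  proof (intro conjI)
    show "\<exists>L. ((\<lambda>h. Limsup at_top (\<lambda>t. ereal (g t h / h))) \<longlongrightarrow> L) at_top"
      using LA(1) by (rule exI)
    show "\<exists>L. ((\<lambda>h. Liminf at_top (\<lambda>t. ereal (g t h / h))) \<longlongrightarrow> L) at_top"
      using LB(1) by (rule exI)
    show "\<exists>L1 L2. ((\<lambda>t. Limsup at_top (\<lambda>h. ereal (g t h / h))) \<longlongrightarrow> L1) at_top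
             \<and> ((\<lambda>h. Limsup at_top (\<lambda>t. ereal (g t h / h))) \<longlongrightarrow> L2) at_top
             \<and> L1 \<le> L2"
      by (rule exI[of _ "P.C (T + 1)"], rule exI[of _ LA]) (intro conjI Ct LA(1) LA(4))
    show "\<exists>L1 L2. ((\<lambda>t. Liminf at_top (\<lambda>h. ereal (g t h / h))) \<longlongrightarrow> L1) at_top
             \<and> ((\<lambda>h. Liminf at_top (\<lambda>t. ereal (g t h / h))) \<longlongrightarrow> L2) at_top
             \<and> L1 \<ge> L2"
      by (rule exI[of _ "P.D (T + 1)"], rule exI[of _ LB]) (intro conjI Dt LB(1) LB(2))
    show "\<exists>L. ((\<lambda>h. Limsup at_top (\<lambda>t. ereal (g t h / h))) \<longlongrightarrow> L) at_top
          \<and> (\<bar>L\<bar> = \<infinity> \<longleftrightarrow> (\<exists>h>0. \<bar>Limsup at_top (\<lambda>t. ereal (g t h))\<bar> = \<infinity>))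
          \<and> (\<bar>L\<bar> = \<infinity> \<longleftrightarrow> (\<forall>h>0. \<bar>Limsup at_top (\<lambda>t. ereal (g t h))\<bar> = \<infinity>))"
      by (rule exI[of _ LA]) (intro conjI LA'(1) LA'(2) LA'(3))
  qed
qed

end
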